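(* Let $(e_i)$ be a right dominant normalized basis of a Banach space $E$, and let $J(e_i)$, $(u_i)$ be as in the context. There exists a constant $C$ such that the following holds. Whenever $l\in\mathbb N$, $n(1)<n(2)<\dots<n(l+1)$ are positive integers and $(a_j)$ are real numbers such that \[ v_i=\sum_{j=n(i)}^{n(i+1)-1}a_ju_j,\qquad \sum_{j=n(i)}^{n(i+1)-1}a_j=0,\qquad 1\le i\le l, \] there is a block basis $(w_i)_{i=1}^l$ of $(e_i)$ such that $\|w_i\|\le\|v_i\|$ for $1\le i\le l$ and $\|\sum_{i=1}^l v_i\|\le C\|\sum_{i=1}^l w_i\|$.
   Context: A basic sequence $(x_i)$ is right dominant if it is unconditional and there is a constant $D$ such that whenever $1\le m(1)\le n(1)<m(2)\le n(2)<\dots$ and $(a_{n(i)})$ is a finitely nonzero real sequence, $\|\sum a_{n(i)}x_{m(i)}\|\le D\|\sum a_{n(i)}x_{n(i)}\|$. Given a normalized unconditional basis $(e_i)$ of $E$, for finitely nonzero real $(a_i)$ define \[\Big\|\sum a_iu_i\Big\|=\sup\Big\{\Big\|\sum_{i=1}^k\Big(\sum_{j=p(i)}^{p(i+1)-1}a_j\Big)e_{p(i)}\Big\|_E : k\in\mathbb N,\ 1=p(1)<p(2)<\dots<p(k+1)\Big\},\] and let $J(e_i)$ be the completion of the linear span of the formal vectors $(u_i)$ under this norm; $(u_i)$ is a basis of $J(e_i)$. A block basis of a basis $(x_i)$ is a sequence $w_m=\sum_{j=q_m}^{q_{m+1}-1}c_jx_j$ with $q_1<q_2<\cdots$. *)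

theory Defs
  imports "HOL-Analysis.Analysis"
begin

text \<open>Indexing convention: all sequences are indexed from 0 (the paper's index 1
corresponds to index 0 here).\<close>

definition schauder_basis :: "(nat \<Rightarrow> 'a::banach) \<Rightarrow> bool" where
  "schauder_basis e \<longleftrightarrow>
     (\<forall>x. \<exists>!a::nat \<Rightarrow> real. (\<lambda>n. \<Sum>i<n. a i *\<^sub>R e i) \<longlonglongrightarrow> x)"

definition unconditional_basis :: "(nat \<Rightarrow> 'a::banach) \<Rightarrow> bool" where
  "unconditional_basis e \<longleftrightarrow> schauder_basis e \<and>
     (\<forall>x a. (\<lambda>n. \<Sum>i<n. a i *\<^sub>R e i) \<longlonglongrightarrow> x \<longrightarrow>
             ((\<lambda>i. a i *\<^sub>R e i) has_sum x) UNIV)"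

definition normalized :: "(nat \<Rightarrow> 'a::real_normed_vector) \<Rightarrow> bool" where
  "normalized e \<longleftrightarrow> (\<forall>i. norm (e i) = 1)"

text \<open>Right dominance: 0 \<le> m(0) \<le> n(0) < m(1) \<le> n(1) < ... (k terms),
coefficients b i standing for a_{n(i)}.\<close>
definition right_dominant :: "(nat \<Rightarrow> 'a::banach) \<Rightarrow> bool" where
  "right_dominant x \<longleftrightarrow> unconditional_basis x \<and>
     (\<exists>D. \<forall>(k::nat) (m::nat \<Rightarrow> nat) (n::nat \<Rightarrow> nat) (b::nat \<Rightarrow> real).
        (\<forall>i<k. m i \<le> n i) \<and> (\<forall>i. Suc i < k \<longrightarrow> n i < m (Suc i)) \<longrightarrow>
        norm (\<Sum>i<k. b i *\<^sub>R x (m i)) \<le> D * norm (\<Sum>i<k. b i *\<^sub>R x (n i)))"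

text \<open>The norm of J(e_i) on the finite vector \<Sum> a_j u_j (a finitely supported):
supremum over k and 0 = p(0) < p(1) < ... < p(k).\<close>
definition Jnorm :: "(nat \<Rightarrow> 'a::real_normed_vector) \<Rightarrow> (nat \<Rightarrow> real) \<Rightarrow> real" where
  "Jnorm e a = (SUP kp \<in> {(k::nat, p::nat \<Rightarrow> nat). p 0 = 0 \<and> (\<forall>i<k. p i < p (Suc i))}.
      norm (\<Sum>i<fst kp. (\<Sum>j\<in>{snd kp i..<snd kp (Suc i)}. a j) *\<^sub>R e (snd kp i)))"

end

theory Submission
  imports Defs
begin

lemma baire_ball:
  fixes F :: "nat \<Rightarrow> 'a::banach set"
  assumes "(\<Union>n. F n) = UNIV"
  shows "\<exists>n x0 r. r > 0 \<and> ball x0 r \<subseteq> closure (F n)"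
proof (rule ccontr)
  assume H: "\<not> ?thesis"
  have "euclidean interior_of \<Union>(range (\<lambda>n. closure (F n))) = {}"
  proof (rule Baire_category_alt)
    show "completely_metrizable_space (euclidean::'a topology) \<or> locally_compact_space (euclidean::'a topology) \<and> regular_space (euclidean::'a topology)"
      using completely_metrizable_space_euclidean by blast
    show "countable (range (\<lambda>n. closure (F n)))" by simp
    fix T assume "T \<in> range (\<lambda>n. closure (F n))"
    then obtain n where T: "T = closure (F n)" by auto
    have "interior T = {}"
    proof (rule ccontr)
      assume "interior T \<noteq> {}"
      then obtain x where "x \<in> interior T" by auto
      then obtain r where "r > 0" "ball x r \<subseteq> T"
        by (meson mem_interior)
      with H T show False by blast
    qed
    then show "closedin euclidean T \<and> euclidean interior_of T = {}"
      by (simp add: T)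
  qed
  moreover have "\<Union>(range (\<lambda>n. closure (F n))) = UNIV"
    using assms closure_subset by blast
  ultimately show False by simp
qed

locale ubasis =
  fixes e :: "nat \<Rightarrow> 'a::banach"
  assumes unc: "unconditional_basis e" and nrm: "normalized e"
begin

definition coef :: "'a \<Rightarrow> nat \<Rightarrow> real" where
  "coef x = (THE a. (\<lambda>n. \<Sum>i<n. a i *\<^sub>R e i) \<longlonglongrightarrow> x)"

lemma ex1: "\<exists>!a. (\<lambda>n. \<Sum>i<n. a i *\<^sub>R e i) \<longlonglongrightarrow> x"
  using unc unfolding unconditional_basis_def schauder_basis_def by blast

lemma coef_lim: "(\<lambda>n. \<Sum>i<n. coef x i *\<^sub>R e i) \<longlonglongrightarrow> x"
  unfolding coef_def using theI'[OF ex1] .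

lemma coef_unique: "(\<lambda>n. \<Sum>i<n. a i *\<^sub>R e i) \<longlonglongrightarrow> x \<Longrightarrow> coef x = a"
  using ex1 coef_lim by blast

lemma norm_e[simp]: "norm (e i) = 1"
  using nrm unfolding normalized_def by blast

lemma coef_add: "coef (x + y) = (\<lambda>i. coef x i + coef y i)"
  by (rule coef_unique)
     (use tendsto_add[OF coef_lim[of x] coef_lim[of y]] in \<open>simp add: scaleR_add_left sum.distrib\<close>)

lemma coef_scale: "coef (t *\<^sub>R x) = (\<lambda>i. t * coef x i)"
  by (rule coef_unique)
     (use tendsto_scaleR[OF tendsto_const[of t] coef_lim[of x]] in \<open>simp add: scaleR_sum_right\<close>)

lemma coef_minus: "coef (- x) = (\<lambda>i. - coef x i)"
  using coef_scale[of "-1" x] by simp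

lemma coef_diff: "coef (x - y) = (\<lambda>i. coef x i - coef y i)"
  using coef_add[of x "-y"] coef_minus[of y] by simp

lemma coef_zero: "coef 0 = (\<lambda>i. 0)"
  using coef_scale[of 0 0] by simp

lemma coef_sum: "coef (\<Sum>k<(m::nat). z k) = (\<lambda>i. \<Sum>k<m. coef (z k) i)"
  by (induction m) (simp_all add: coef_zero coef_add)

lemma coef_fin:
  assumes "finite B"
  shows "coef (\<Sum>j\<in>B. c j *\<^sub>R e j) = (\<lambda>j. if j \<in> B then c j else 0)"
proof (rule coef_unique)
  obtain N where N0: "B \<subseteq> {..<N}"
    using assms finite_nat_bounded by blast
  then have N: "\<forall>j\<in>B. j < N" by auto
  have "\<forall>n\<ge>N. (\<Sum>i<n. (if i \<in> B then c i else 0) *\<^sub>R e i) = (\<Sum>j\<in>B. c j *\<^sub>R e j)"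
  proof (intro allI impI)
    fix n assume "N \<le> n"
    then have "B \<subseteq> {..<n}" using N by auto
    then show "(\<Sum>i<n. (if i \<in> B then c i else 0) *\<^sub>R e i) = (\<Sum>j\<in>B. c j *\<^sub>R e j)"
      by (simp add: if_distrib[of "\<lambda>t. t *\<^sub>R _"] sum.If_cases Int_absorb1)
  qed
  then show "(\<lambda>n. \<Sum>i<n. (if i \<in> B then c i else 0) *\<^sub>R e i) \<longlonglongrightarrow> (\<Sum>j\<in>B. c j *\<^sub>R e j)"
    by (intro tendsto_eventually) (auto simp: eventually_sequentially)
qed

lemma coef_hassum: "((\<lambda>i. coef x i *\<^sub>R e i) has_sum x) UNIV"
  using unc coef_lim unfolding unconditional_basis_def by blast

definition FF :: "real \<Rightarrow> 'a set" where
  "FF c = {x. \<forall>A. finite A \<longrightarrow> norm (\<Sum>i\<in>A. coef x i *\<^sub>R e i) \<le> c}"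

lemma FF_cover: "\<exists>M. x \<in> FF M"
proof -
  have "eventually (\<lambda>Y. dist (\<Sum>i\<in>Y. coef x i *\<^sub>R e i) x < 1) (finite_subsets_at_top UNIV)"
    using coef_hassum[of x] unfolding has_sum_def tendsto_iff by simp
  then have "\<exists>X. finite X \<and> X \<subseteq> UNIV \<and> (\<forall>Y. finite Y \<and> X \<subseteq> Y \<and> Y \<subseteq> UNIV \<longrightarrow> dist (\<Sum>i\<in>Y. coef x i *\<^sub>R e i) x < 1)"
    unfolding eventually_finite_subsets_at_top .
  then obtain X where X: "finite X" "\<And>Y. finite Y \<Longrightarrow> X \<subseteq> Y \<Longrightarrow> dist (\<Sum>i\<in>Y. coef x i *\<^sub>R e i) x < 1"
    by auto
  let ?f = "\<lambda>i. coef x i *\<^sub>R e i"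
  have "norm (sum ?f A) \<le> norm x + 1 + (\<Sum>i\<in>X. norm (?f i))" if "finite A" for A
  proof -
    have eq: "sum ?f A = sum ?f (A \<union> X) - sum ?f (X - A)"
    proof -
      have "sum ?f (A \<union> X) = sum ?f A + sum ?f (X - A)"
      proof -
        have "A \<union> X = A \<union> (X - A)" by auto
        then show ?thesis using sum.union_disjoint[of A "X - A" ?f] that X(1) by auto
      qed
      then show ?thesis by simp
    qed
    have "norm (sum ?f (A \<union> X)) \<le> norm x + 1"
      proof -
      have "norm (sum ?f (A \<union> X) - x) < 1"
        using X(2)[of "A \<union> X"] that X(1) by (simp add: dist_norm)
      moreover have "norm (sum ?f (A \<union> X)) \<le> norm (sum ?f (A \<union> X) - x) + norm x"
        using norm_triangle_sub[of "sum ?f (A \<union> X)" x] by linarith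
      ultimately show ?thesis by linarith
    qed
    moreover have "norm (sum ?f (X - A)) \<le> (\<Sum>i\<in>X. norm (?f i))"
      by (rule order_trans[OF norm_sum]) (rule sum_mono2, use X(1) in auto)
    moreover have "norm (sum ?f A) \<le> norm (sum ?f (A \<union> X)) + norm (sum ?f (X - A))"
      unfolding eq by (rule norm_triangle_ineq4)
    ultimately show ?thesis by linarith
  qed
  then show ?thesis unfolding FF_def by blast
qed

end

lemma norm_sums_le:
  fixes f :: "nat \<Rightarrow> 'a::real_normed_vector"
  assumes "f sums s" "\<And>k. norm (f k) \<le> g k" "summable g"
  shows "norm s \<le> suminf g"
proof -
  have "(\<lambda>n. norm (\<Sum>k<n. f k)) \<longlonglongrightarrow> norm s"
    using assms(1) unfolding sums_def by (rule tendsto_norm)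
  moreover have "norm (\<Sum>k<n. f k) \<le> suminf g" for n
  proof -
    have "norm (\<Sum>k<n. f k) \<le> (\<Sum>k<n. norm (f k))" by (rule norm_sum)
    also have "\<dots> \<le> (\<Sum>k<n. g k)" by (rule sum_mono) (rule assms(2))
    also have "\<dots> \<le> suminf g"
      by (rule sum_le_suminf[OF assms(3)]) (auto intro: order_trans[OF norm_ge_zero assms(2)])
    finally show ?thesis .
  qed
  ultimately show ?thesis by (intro LIMSEQ_le_const2) auto
qed

primrec itr :: "('a::real_normed_vector \<Rightarrow> nat \<Rightarrow> 'a) \<Rightarrow> 'a \<Rightarrow> nat \<Rightarrow> 'a" where
  "itr Z y 0 = y"
| "itr Z y (Suc k) = itr Z y k - Z (itr Z y k) k"

context ubasis
begin

lemma FF_diff: "x \<in> FF c \<Longrightarrow> y \<in> FF d \<Longrightarrow> x - y \<in> FF (c + d)"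
proof -
  assume x: "x \<in> FF c" and y: "y \<in> FF d"
  show ?thesis unfolding FF_def
  proof (intro CollectI allI impI)
    fix A :: "nat set" assume A: "finite A"
    have "(\<Sum>i\<in>A. coef (x - y) i *\<^sub>R e i) = (\<Sum>i\<in>A. coef x i *\<^sub>R e i) - (\<Sum>i\<in>A. coef y i *\<^sub>R e i)"
      by (simp add: coef_diff scaleR_diff_left sum_subtractf)
    also have "norm \<dots> \<le> norm (\<Sum>i\<in>A. coef x i *\<^sub>R e i) + norm (\<Sum>i\<in>A. coef y i *\<^sub>R e i)"
      by (rule norm_triangle_ineq4)
    also have "\<dots> \<le> c + d" using x y A unfolding FF_def by (intro add_mono) auto
    finally show "norm (\<Sum>i\<in>A. coef (x - y) i *\<^sub>R e i) \<le> c + d" .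
  qed
qed

lemma FF_scale: "x \<in> FF c \<Longrightarrow> t *\<^sub>R x \<in> FF (\<bar>t\<bar> * c)"
proof -
  assume x: "x \<in> FF c"
  show ?thesis unfolding FF_def
  proof (intro CollectI allI impI)
    fix A :: "nat set" assume A: "finite A"
    have "(\<Sum>i\<in>A. coef (t *\<^sub>R x) i *\<^sub>R e i) = t *\<^sub>R (\<Sum>i\<in>A. coef x i *\<^sub>R e i)"
      by (simp add: coef_scale scaleR_sum_right)
    then have "norm (\<Sum>i\<in>A. coef (t *\<^sub>R x) i *\<^sub>R e i) = \<bar>t\<bar> * norm (\<Sum>i\<in>A. coef x i *\<^sub>R e i)"
      by simp
    also have "\<dots> \<le> \<bar>t\<bar> * c" using x A unfolding FF_def by (intro mult_left_mono) auto
    finally show "norm (\<Sum>i\<in>A. coef (t *\<^sub>R x) i *\<^sub>R e i) \<le> \<bar>t\<bar> * c" .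
  qed
qed

lemma FF_mono: "x \<in> FF c \<Longrightarrow> c \<le> d \<Longrightarrow> x \<in> FF d"
  unfolding FF_def by (auto intro: order_trans)

lemma FF_coef: "x \<in> FF c \<Longrightarrow> \<bar>coef x i\<bar> \<le> c"
proof -
  assume "x \<in> FF c"
  then have "norm (\<Sum>j\<in>{i}. coef x j *\<^sub>R e j) \<le> c" unfolding FF_def by blast
  then show ?thesis by simp
qed

lemma FF_zero: "0 \<in> FF 0"
  unfolding FF_def by (simp add: coef_zero)

lemma baire_step: "\<exists>m r. r > 0 \<and> m \<ge> 0 \<and> (\<forall>y. norm y < r \<longrightarrow> y \<in> closure (FF m))"
proof -
  have "(\<Union>n. FF (real n)) = UNIV"
  proof -
    have "x \<in> (\<Union>n. FF (real n))" for x
    proof -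
      obtain M where "x \<in> FF M" using FF_cover by blast
      moreover obtain n where "M \<le> real n" using real_arch_simple by blast
      ultimately show ?thesis using FF_mono by blast
    qed
    then show ?thesis by blast
  qed
  then obtain n x0 r where r: "r > 0" "ball x0 r \<subseteq> closure (FF (real n))"
    using baire_ball by blast
  have "y \<in> closure (FF (real n + real n))" if "norm y < r" for y
    unfolding closure_approachable
  proof (intro allI impI)
    fix \<epsilon> :: real assume "\<epsilon> > 0"
    have "x0 + y \<in> closure (FF (real n))" using r that by (auto simp: dist_norm)
    then obtain u where u: "u \<in> FF (real n)" "dist u (x0 + y) < \<epsilon>/2"
      unfolding closure_approachable using half_gt_zero[OF \<open>\<epsilon> > 0\<close>] by blast
    have "x0 \<in> closure (FF (real n))" using r by auto
    then obtain u' where u': "u' \<in> FF (real n)" "dist u' x0 < \<epsilon>/2"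
      unfolding closure_approachable using half_gt_zero[OF \<open>\<epsilon> > 0\<close>] by blast
    have "u - u' \<in> FF (real n + real n)" using u u' FF_diff by blast
    moreover have "dist (u - u') y < \<epsilon>"
    proof -
      have eq: "u - u' - y = (u - (x0 + y)) - (u' - x0)" by (simp add: algebra_simps)
      have "norm (u - u' - y) \<le> norm (u - (x0 + y)) + norm (u' - x0)"
        by (subst eq) (rule norm_triangle_ineq4)
      then show ?thesis using u(2) u'(2) by (simp add: dist_norm)
    qed
    ultimately show "\<exists>x'\<in>FF (real n + real n). dist x' y < \<epsilon>" by blast
  qed
  then show ?thesis using r(1) by (intro exI[of _ "real n + real n"] exI[of _ r]) auto
qed

lemma approx_step: "\<exists>L0\<ge>0. \<forall>y \<epsilon>. \<epsilon> > 0 \<longrightarrow> (\<exists>z. z \<in> FF (L0 * norm y) \<and> norm (y - z) < \<epsilon>)"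
proof -
  obtain m r where mr: "r > 0" "m \<ge> 0" "\<And>y. norm y < r \<Longrightarrow> y \<in> closure (FF m)"
    using baire_step by blast
  have "\<exists>z. z \<in> FF (2 * m / r * norm y) \<and> norm (y - z) < \<epsilon>" if eps: "\<epsilon> > 0" for y \<epsilon>
  proof (cases "y = 0")
    case True
    then show ?thesis using FF_zero that by (intro exI[of _ 0]) simp
  next
    case False
    define t where "t = r / (2 * norm y)"
    have t: "t > 0" using mr False by (simp add: t_def)
    have "norm (t *\<^sub>R y) = r / 2" using False mr t by (simp add: t_def)
    then have "t *\<^sub>R y \<in> closure (FF m)" using mr by simp
    then obtain z' where z': "z' \<in> FF m" "dist z' (t *\<^sub>R y) < \<epsilon> * t"
      unfolding closure_approachable using mult_pos_pos[OF eps t] by blast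
    have "(1/t) *\<^sub>R z' \<in> FF (\<bar>1/t\<bar> * m)" using FF_scale z'(1) by blast
    moreover have "\<bar>1/t\<bar> * m = 2 * m / r * norm y"
      using t mr False by (simp add: t_def field_simps)
    moreover have "norm (y - (1/t) *\<^sub>R z') < \<epsilon>"
    proof -
      have "y - (1/t) *\<^sub>R z' = (1/t) *\<^sub>R (t *\<^sub>R y - z')" using t by (simp add: algebra_simps)
      then have "norm (y - (1/t) *\<^sub>R z') = norm (t *\<^sub>R y - z') / t" using t by simp
      also have "\<dots> < \<epsilon>" using z'(2) t by (simp add: dist_norm norm_minus_commute divide_less_eq)
      finally show ?thesis .
    qed
    ultimately show ?thesis by auto
  qed
  moreover have "2 * m / r \<ge> 0" using mr by simp
  ultimately show ?thesis by blast
qed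

end

context ubasis
begin

lemma unc_bound_nonzero:
  assumes L0: "L0 \<ge> 0" and appr: "\<And>y \<epsilon>. \<epsilon> > 0 \<Longrightarrow> \<exists>z. z \<in> FF (L0 * norm y) \<and> norm (y - z) < \<epsilon>"
    and y0: "y \<noteq> 0"
  shows "y \<in> FF (2 * L0 * norm y)"
proof -
  define \<delta> where "\<delta> = norm y"
  have \<delta>: "\<delta> > 0" using y0 by (simp add: \<delta>_def)
  define Z where "Z = (\<lambda>v (k::nat). SOME z. z \<in> FF (L0 * norm v) \<and> norm (v - z) < \<delta> / 2 ^ Suc k)"
  have Zp: "Z v k \<in> FF (L0 * norm v) \<and> norm (v - Z v k) < \<delta> / 2 ^ Suc k" for v k
  proof -
    have "\<exists>z. z \<in> FF (L0 * norm v) \<and> norm (v - z) < \<delta> / 2 ^ Suc k"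
      using appr \<delta> by simp
    then show ?thesis unfolding Z_def by (rule someI_ex)
  qed
  define ys where "ys = itr Z y"
  define zs where "zs = (\<lambda>k. Z (ys k) k)"
  define \<beta> where "\<beta> = (\<lambda>k::nat. L0 * \<delta> / 2 ^ k)"
  have ys_bound: "norm (ys k) \<le> \<delta> / 2 ^ k" for k
  proof (cases k)
    case 0 then show ?thesis by (simp add: ys_def \<delta>_def)
  next
    case (Suc j)
    have "norm (ys (Suc j)) = norm (ys j - Z (ys j) j)" by (simp add: ys_def)
    also have "\<dots> < \<delta> / 2 ^ Suc j" using Zp by blast
    finally show ?thesis using Suc by simp
  qed
  have zs_FF: "zs k \<in> FF (\<beta> k)" for k
  proof -
    have "zs k \<in> FF (L0 * norm (ys k))" using Zp by (simp add: zs_def)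
    moreover have "L0 * norm (ys k) \<le> \<beta> k"
      using mult_left_mono[OF ys_bound[of k] L0] by (simp add: \<beta>_def)
    ultimately show ?thesis by (rule FF_mono)
  qed
  have sum_zs: "(\<Sum>k<m. zs k) = y - ys m" for m
    by (induction m) (simp_all add: ys_def zs_def)
  have \<beta>_sums: "(\<lambda>k. \<beta> (k + m)) sums (2 * L0 * \<delta> / 2 ^ m)" for m
  proof -
    have "(\<lambda>k. (1/2::real) ^ k) sums 2"
      using geometric_sums[of "1/2::real"] by simp
    then have "(\<lambda>k. (L0 * \<delta> / 2 ^ m) * (1/2::real) ^ k) sums ((L0 * \<delta> / 2 ^ m) * 2)"
      by (rule sums_mult)
    moreover have "(\<lambda>k. (L0 * \<delta> / 2 ^ m) * (1/2::real) ^ k) = (\<lambda>k. \<beta> (k + m))"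
      by (rule ext) (simp add: \<beta>_def power_add power_one_over)
    moreover have "(L0 * \<delta> / 2 ^ m) * 2 = 2 * L0 * \<delta> / 2 ^ m" by simp
    ultimately show ?thesis by (simp only:)
  qed
  have \<beta>_summ: "summable (\<lambda>k. \<beta> (k + m))" for m
    using \<beta>_sums sums_summable by blast
  have \<beta>_summ0: "summable \<beta>" using \<beta>_summ[of 0] by simp
  have \<beta>_suminf: "suminf (\<lambda>k. \<beta> (k + m)) = 2 * L0 * \<delta> / 2 ^ m" for m
    using sums_unique[OF \<beta>_sums[of m]] by simp
  have coef_zs: "\<bar>coef (zs k) i\<bar> \<le> \<beta> k" for k i using zs_FF FF_coef by blast
  define b where "b = (\<lambda>i. suminf (\<lambda>k. coef (zs k) i))"
  have b_sums: "(\<lambda>k. coef (zs k) i) sums b i" for i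
  proof -
    have "summable (\<lambda>k. coef (zs k) i)"
      by (rule summable_comparison_test[OF _ \<beta>_summ0]) (use coef_zs in auto)
    then show ?thesis unfolding b_def by (rule summable_sums)
  qed
  define V where "V = (\<lambda>A k. \<Sum>i\<in>A. coef (zs k) i *\<^sub>R e i)"
  have V_bound: "finite A \<Longrightarrow> norm (V A k) \<le> \<beta> k" for A k
    using zs_FF[of k] unfolding FF_def V_def by blast
  have V_sums: "finite A \<Longrightarrow> (\<lambda>k. V A k) sums (\<Sum>i\<in>A. b i *\<^sub>R e i)" for A
    unfolding V_def by (intro sums_sum sums_scaleR_left b_sums)
  have tail: "finite A \<Longrightarrow> norm ((\<Sum>i\<in>A. b i *\<^sub>R e i) - (\<Sum>k<m. V A k)) \<le> 2 * L0 * \<delta> / 2 ^ m" for A m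
  proof -
    assume A: "finite A"
    have "(\<lambda>k. V A (k + m)) sums ((\<Sum>i\<in>A. b i *\<^sub>R e i) - (\<Sum>k<m. V A k))"
      using V_sums[OF A] by (subst sums_iff_shift) simp
    then have "norm ((\<Sum>i\<in>A. b i *\<^sub>R e i) - (\<Sum>k<m. V A k)) \<le> suminf (\<lambda>k. \<beta> (k + m))"
      by (rule norm_sums_le) (use V_bound[OF A] \<beta>_summ in auto)
    then show ?thesis using \<beta>_suminf by simp
  qed
  have VP: "(\<Sum>k<m. V A k) = (\<Sum>i\<in>A. coef (y - ys m) i *\<^sub>R e i)" for A m
  proof -
    have "(\<Sum>k<m. V A k) = (\<Sum>i\<in>A. \<Sum>k<m. coef (zs k) i *\<^sub>R e i)"
      unfolding V_def by (rule sum.swap)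
    also have "\<dots> = (\<Sum>i\<in>A. (\<Sum>k<m. coef (zs k) i) *\<^sub>R e i)" by (simp add: scaleR_sum_left)
    also have "\<dots> = (\<Sum>i\<in>A. coef (y - ys m) i *\<^sub>R e i)"
      unfolding sum_zs[symmetric] coef_sum by simp
    finally show ?thesis .
  qed
  have b_lim: "(\<lambda>N. \<Sum>i<N. b i *\<^sub>R e i) \<longlonglongrightarrow> y"
  proof (rule LIMSEQ_I)
    fix \<epsilon> :: real assume \<epsilon>: "\<epsilon> > 0"
    obtain m where m: "(2 * L0 * \<delta> + \<delta>) * 2 / \<epsilon> < 2 ^ m"
      using real_arch_pow[of 2] by auto
    have m': "2 * L0 * \<delta> / 2 ^ m + \<delta> / 2 ^ m < \<epsilon> / 2"
    proof -
      have "(2 * L0 * \<delta> + \<delta>) * 2 < \<epsilon> * 2 ^ m" using m \<epsilon> by (simp add: divide_less_eq mult.commute)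
      then show ?thesis by (simp add: field_simps)
    qed
    let ?s = "y - ys m"
    obtain N0 where N0: "\<And>N. N \<ge> N0 \<Longrightarrow> norm ((\<Sum>i<N. coef ?s i *\<^sub>R e i) - ?s) < \<epsilon> / 2"
      using LIMSEQ_D[OF coef_lim[of ?s], of "\<epsilon>/2"] \<epsilon> by auto
    show "\<exists>no. \<forall>N\<ge>no. norm ((\<Sum>i<N. b i *\<^sub>R e i) - y) < \<epsilon>"
    proof (intro exI allI impI)
      fix N assume N: "N \<ge> N0"
      let ?W = "\<Sum>i<N. b i *\<^sub>R e i" and ?P = "\<Sum>i<N. coef ?s i *\<^sub>R e i"
      have "?W - y = (?W - ?P) + (?P - ?s) + (?s - y)" by simp
      moreover have "norm ((?W - ?P) + (?P - ?s) + (?s - y)) \<le> norm ((?W - ?P) + (?P - ?s)) + norm (?s - y)"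
        by (rule norm_triangle_ineq)
      moreover have "norm ((?W - ?P) + (?P - ?s)) \<le> norm (?W - ?P) + norm (?P - ?s)"
        by (rule norm_triangle_ineq)
      ultimately have "norm (?W - y) \<le> norm (?W - ?P) + norm (?P - ?s) + norm (?s - y)"
        by simp
      moreover have "norm (?W - ?P) \<le> 2 * L0 * \<delta> / 2 ^ m" using tail[of "{..<N}" m] VP by simp
      moreover have "norm (?s - y) \<le> \<delta> / 2 ^ m" using ys_bound[of m] by simp
      moreover have "norm (?P - ?s) < \<epsilon> / 2" using N0 N by blast
      ultimately show "norm (?W - y) < \<epsilon>" using m' by linarith
    qed
  qed
  then have cy: "coef y = b" by (rule coef_unique)
  show ?thesis unfolding FF_def
  proof (intro CollectI allI impI)
    fix A :: "nat set" assume A: "finite A"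
    have "norm (\<Sum>i\<in>A. b i *\<^sub>R e i) \<le> suminf \<beta>"
      by (rule norm_sums_le[OF V_sums[OF A]]) (use V_bound[OF A] \<beta>_summ0 in auto)
    also have "suminf \<beta> = 2 * L0 * \<delta>" using \<beta>_suminf[of 0] by simp
    finally show "norm (\<Sum>i\<in>A. coef y i *\<^sub>R e i) \<le> 2 * L0 * norm y" by (simp add: cy \<delta>_def)
  qed
qed

lemma unc_const: "\<exists>L\<ge>0. \<forall>y. y \<in> FF (L * norm y)"
proof -
  obtain L0 where L0: "L0 \<ge> 0" "\<And>y \<epsilon>. \<epsilon> > 0 \<Longrightarrow> \<exists>z. z \<in> FF (L0 * norm y) \<and> norm (y - z) < \<epsilon>"
    using approx_step by blast
  have "y \<in> FF (2 * L0 * norm y)" for y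
    using unc_bound_nonzero[OF L0] FF_zero by (cases "y = 0") auto
  then show ?thesis using L0(1) by (intro exI[of _ "2 * L0"]) auto
qed

lemma proj_bound: "\<exists>L\<ge>1. \<forall>(B::nat set) A c. finite B \<longrightarrow>
   norm (\<Sum>j\<in>B \<inter> A. c j *\<^sub>R e j) \<le> L * norm (\<Sum>j\<in>B. c j *\<^sub>R e j)"
proof -
  obtain L where L: "L \<ge> 0" "\<And>y. y \<in> FF (L * norm y)" using unc_const by blast
  have "norm (\<Sum>j\<in>B \<inter> A. c j *\<^sub>R e j) \<le> max L 1 * norm (\<Sum>j\<in>B. c j *\<^sub>R e j)" if B: "finite B" for B A c
  proof -
    let ?y = "\<Sum>j\<in>B. c j *\<^sub>R e j"
    have "norm (\<Sum>j\<in>B \<inter> A. coef ?y j *\<^sub>R e j) \<le> L * norm ?y"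
      using L(2)[of ?y] B unfolding FF_def by blast
    moreover have "(\<Sum>j\<in>B \<inter> A. coef ?y j *\<^sub>R e j) = (\<Sum>j\<in>B \<inter> A. c j *\<^sub>R e j)"
      by (rule sum.cong) (auto simp: coef_fin[OF B])
    moreover have "L * norm ?y \<le> max L 1 * norm ?y" by (intro mult_right_mono) auto
    ultimately show ?thesis by simp
  qed
  then show ?thesis by (intro exI[of _ "max L 1"]) auto
qed

end

lemma mono_steps:
  fixes p :: "nat \<Rightarrow> nat"
  assumes "\<forall>i<K. p i \<le> p (Suc i)" "i \<le> j" "j \<le> K"
  shows "p i \<le> p j"
  using assms(2,3)
proof (induction j)
  case 0 then show ?case by simp
next
  case (Suc j)
  show ?case
  proof (cases "i = Suc j")
    case True then show ?thesis by simp
  next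
    case False
    then have "p i \<le> p j" using Suc by simp
    also have "p j \<le> p (Suc j)" using assms(1) Suc.prems by simp
    finally show ?thesis .
  qed
qed

lemma strict_steps:
  fixes p :: "nat \<Rightarrow> nat"
  assumes "\<forall>i<K. p i < p (Suc i)" "i < j" "j \<le> K"
  shows "p i < p j"
proof -
  have m: "\<forall>i<K. p i \<le> p (Suc i)" using assms(1) by (simp add: less_imp_le)
  have "p i < p (Suc i)" using assms by simp
  also have "p (Suc i) \<le> p j" using mono_steps[OF m, of "Suc i" j] assms by simp
  finally show ?thesis .
qed

lemma strict_steps_iff:
  fixes p :: "nat \<Rightarrow> nat"
  assumes "\<forall>i<K. p i < p (Suc i)" "i \<le> K" "j \<le> K"
  shows "p i < p j \<longleftrightarrow> i < j"
  using strict_steps[OF assms(1)] assms(2,3)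
  by (metis less_asym linorder_neqE_nat)

lemma ivl_unique:
  fixes p :: "nat \<Rightarrow> nat"
  assumes "\<forall>i<K. p i < p (Suc i)" "k < K" "k' < K"
    "p k \<le> x" "x < p (Suc k)" "p k' \<le> x" "x < p (Suc k')"
  shows "k = k'"
proof (rule ccontr)
  assume "k \<noteq> k'"
  then consider "k < k'" | "k' < k" by linarith
  then show False
  proof cases
    case 1
    then have "p (Suc k) \<le> p k'"
      using strict_steps_iff[OF assms(1), of "Suc k" k'] assms(3) by (cases "Suc k = k'") auto
    then show False using assms by simp
  next
    case 2
    then have "p (Suc k') \<le> p k"
      using strict_steps_iff[OF assms(1), of "Suc k'" k] assms(2) by (cases "Suc k' = k") auto
    then show False using assms by simp
  qed
qed

lemma sum_concat:
  fixes p :: "nat \<Rightarrow> nat" and f :: "nat \<Rightarrow> 'b::comm_monoid_add"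
  assumes "\<forall>i<K. p i \<le> p (Suc i)"
  shows "(\<Sum>i<K. \<Sum>j\<in>{p i..<p (Suc i)}. f j) = (\<Sum>j\<in>{p 0..<p K}. f j)"
  using assms
proof (induction K)
  case 0 then show ?case by simp
next
  case (Suc K)
  then have IH: "(\<Sum>i<K. \<Sum>j\<in>{p i..<p (Suc i)}. f j) = (\<Sum>j\<in>{p 0..<p K}. f j)" by simp
  have "p 0 \<le> p K" using mono_steps[OF Suc.prems, of 0 K] by simp
  moreover have "p K \<le> p (Suc K)" using Suc.prems by simp
  ultimately show ?case using IH sum.atLeastLessThan_concat[of "p 0" "p K" "p (Suc K)" f] by simp
qed

lemma ivl_sum_diff:
  fixes f :: "nat \<Rightarrow> real"
  assumes "x \<le> y"
  shows "(\<Sum>j\<in>{x..<y}. f j) = (\<Sum>j<y. f j) - (\<Sum>j<x. f j)"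
  using sum.atLeastLessThan_concat[of 0 x y f] assms by (simp add: atLeast0LessThan)

lemma group_pos:
  fixes e :: "nat \<Rightarrow> 'a::real_vector"
  assumes "finite I" "finite T" "\<pi> ` I \<subseteq> T"
  shows "(\<Sum>i\<in>I. c i *\<^sub>R e (\<pi> i)) = (\<Sum>j\<in>T. (\<Sum>i\<in>{i\<in>I. \<pi> i = j}. c i) *\<^sub>R e j)"
proof -
  have "(\<Sum>i\<in>I. c i *\<^sub>R e (\<pi> i)) = (\<Sum>j\<in>T. \<Sum>i\<in>{i. i \<in> I \<and> \<pi> i = j}. c i *\<^sub>R e (\<pi> i))"
    using sum.group[OF assms, of "\<lambda>i. c i *\<^sub>R e (\<pi> i)"] by simp
  also have "\<dots> = (\<Sum>j\<in>T. \<Sum>i\<in>{i\<in>I. \<pi> i = j}. c i *\<^sub>R e j)"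
    by (intro sum.cong refl) auto
  also have "\<dots> = (\<Sum>j\<in>T. (\<Sum>i\<in>{i\<in>I. \<pi> i = j}. c i) *\<^sub>R e j)"
    by (simp add: scaleR_sum_left)
  finally show ?thesis .
qed

lemma group_pos_filter:
  fixes e :: "nat \<Rightarrow> 'a::real_vector"
  assumes "finite I" "finite T" "\<pi> ` I \<inter> A \<subseteq> T" "T \<subseteq> A"
  shows "(\<Sum>i\<in>{i\<in>I. \<pi> i \<in> A}. c i *\<^sub>R e (\<pi> i)) = (\<Sum>j\<in>T. (\<Sum>i\<in>{i\<in>I. \<pi> i = j}. c i) *\<^sub>R e j)"
proof -
  have "(\<Sum>i\<in>{i\<in>I. \<pi> i \<in> A}. c i *\<^sub>R e (\<pi> i)) = (\<Sum>j\<in>T. (\<Sum>i\<in>{i\<in>{i\<in>I. \<pi> i \<in> A}. \<pi> i = j}. c i) *\<^sub>R e j)"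
    by (rule group_pos) (use assms in auto)
  also have "\<dots> = (\<Sum>j\<in>T. (\<Sum>i\<in>{i\<in>I. \<pi> i = j}. c i) *\<^sub>R e j)"
  proof (intro sum.cong refl)
    fix j assume "j \<in> T"
    then have "{i\<in>{i\<in>I. \<pi> i \<in> A}. \<pi> i = j} = {i\<in>I. \<pi> i = j}" using assms(4) by auto
    then show "(\<Sum>i\<in>{i\<in>{i\<in>I. \<pi> i \<in> A}. \<pi> i = j}. c i) *\<^sub>R e j = (\<Sum>i\<in>{i\<in>I. \<pi> i = j}. c i) *\<^sub>R e j"
      by simp
  qed
  finally show ?thesis .
qed

lemma fproj2:
  fixes e :: "nat \<Rightarrow> 'a::real_normed_vector"
  assumes L: "\<forall>(B::nat set) A c. finite B \<longrightarrow>
     norm (\<Sum>j\<in>B \<inter> A. c j *\<^sub>R e j) \<le> L * norm (\<Sum>j\<in>B. c j *\<^sub>R e j)"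
    and fin: "finite I" "finite J"
  shows "norm ((\<Sum>i\<in>{i\<in>I. \<pi> i \<in> A}. c i *\<^sub>R e (\<pi> i)) + (\<Sum>i\<in>{i\<in>J. \<sigma> i \<in> A}. d i *\<^sub>R e (\<sigma> i)))
     \<le> L * norm ((\<Sum>i\<in>I. c i *\<^sub>R e (\<pi> i)) + (\<Sum>i\<in>J. d i *\<^sub>R e (\<sigma> i)))"
proof -
  let ?S = "\<pi> ` I \<union> \<sigma> ` J"
  let ?y = "\<lambda>j. (\<Sum>i\<in>{i\<in>I. \<pi> i = j}. c i) + (\<Sum>i\<in>{i\<in>J. \<sigma> i = j}. d i)"
  have fS: "finite ?S" using fin by simp
  have h1: "(\<Sum>i\<in>{i\<in>I. \<pi> i \<in> A}. c i *\<^sub>R e (\<pi> i)) = (\<Sum>j\<in>?S \<inter> A. (\<Sum>i\<in>{i\<in>I. \<pi> i = j}. c i) *\<^sub>R e j)"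
    by (rule group_pos_filter) (use fin fS in auto)
  have h2: "(\<Sum>i\<in>{i\<in>J. \<sigma> i \<in> A}. d i *\<^sub>R e (\<sigma> i)) = (\<Sum>j\<in>?S \<inter> A. (\<Sum>i\<in>{i\<in>J. \<sigma> i = j}. d i) *\<^sub>R e j)"
    by (rule group_pos_filter) (use fin fS in auto)
  have "(\<Sum>i\<in>{i\<in>I. \<pi> i \<in> A}. c i *\<^sub>R e (\<pi> i)) + (\<Sum>i\<in>{i\<in>J. \<sigma> i \<in> A}. d i *\<^sub>R e (\<sigma> i))
     = (\<Sum>j\<in>?S \<inter> A. ?y j *\<^sub>R e j)"
    unfolding h1 h2 by (simp add: scaleR_add_left sum.distrib)
  moreover have "(\<Sum>i\<in>I. c i *\<^sub>R e (\<pi> i)) + (\<Sum>i\<in>J. d i *\<^sub>R e (\<sigma> i)) = (\<Sum>j\<in>?S. ?y j *\<^sub>R e j)"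
  proof -
    have g1: "(\<Sum>i\<in>I. c i *\<^sub>R e (\<pi> i)) = (\<Sum>j\<in>?S. (\<Sum>i\<in>{i\<in>I. \<pi> i = j}. c i) *\<^sub>R e j)"
      by (rule group_pos) (use fin fS in auto)
    have g2: "(\<Sum>i\<in>J. d i *\<^sub>R e (\<sigma> i)) = (\<Sum>j\<in>?S. (\<Sum>i\<in>{i\<in>J. \<sigma> i = j}. d i) *\<^sub>R e j)"
      by (rule group_pos) (use fin fS in auto)
    show ?thesis unfolding g1 g2 by (simp add: scaleR_add_left sum.distrib)
  qed
  ultimately show ?thesis using L fS by simp
qed

lemma fproj1:
  fixes e :: "nat \<Rightarrow> 'a::real_normed_vector"
  assumes L: "\<forall>(B::nat set) A c. finite B \<longrightarrow>
     norm (\<Sum>j\<in>B \<inter> A. c j *\<^sub>R e j) \<le> L * norm (\<Sum>j\<in>B. c j *\<^sub>R e j)"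
    and fin: "finite I"
  shows "norm (\<Sum>i\<in>{i\<in>I. \<pi> i \<in> A}. c i *\<^sub>R e (\<pi> i)) \<le> L * norm (\<Sum>i\<in>I. c i *\<^sub>R e (\<pi> i))"
  using fproj2[OF L fin finite.emptyI] by simp

definition PSet :: "(nat \<times> (nat \<Rightarrow> nat)) set" where
  "PSet = {(k::nat, p::nat \<Rightarrow> nat). p 0 = 0 \<and> (\<forall>i<k. p i < p (Suc i))}"

definition JV :: "(nat \<Rightarrow> 'a::real_normed_vector) \<Rightarrow> (nat \<Rightarrow> real) \<Rightarrow> nat \<Rightarrow> (nat \<Rightarrow> nat) \<Rightarrow> 'a" where
  "JV e a k p = (\<Sum>i<k. (\<Sum>j\<in>{p i..<p (Suc i)}. a j) *\<^sub>R e (p i))"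

lemma Jnorm_alt: "Jnorm e a = (SUP kp\<in>PSet. norm (JV e a (fst kp) (snd kp)))"
  unfolding Jnorm_def PSet_def JV_def by simp

lemma sum_abs_le_support:
  fixes f :: "nat \<Rightarrow> real"
  assumes "\<forall>j\<ge>N. f j = 0"
  shows "(\<Sum>j<M. \<bar>f j\<bar>) \<le> (\<Sum>j<N. \<bar>f j\<bar>)"
proof -
  have "(\<Sum>j<M. \<bar>f j\<bar>) = (\<Sum>j\<in>{..<M} \<inter> {..<N}. \<bar>f j\<bar>)"
    by (rule sum.mono_neutral_right) (use assms leI in force)+
  also have "\<dots> \<le> (\<Sum>j<N. \<bar>f j\<bar>)" by (rule sum_mono2) auto
  finally show ?thesis .
qed

lemma JV_bound:
  fixes e :: "nat \<Rightarrow> 'a::real_normed_vector"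
  assumes ne: "\<And>i. norm (e i) = 1" and supp: "\<forall>j\<ge>N. a j = 0"
    and kp: "p 0 = 0" "\<forall>i<k. p i < p (Suc i)"
  shows "norm (JV e a k p) \<le> (\<Sum>j<N. \<bar>a j\<bar>)"
proof -
  have m: "\<forall>i<k. p i \<le> p (Suc i)" using kp by (simp add: less_imp_le)
  have "norm (JV e a k p) \<le> (\<Sum>i<k. norm ((\<Sum>j\<in>{p i..<p (Suc i)}. a j) *\<^sub>R e (p i)))"
    unfolding JV_def by (rule norm_sum)
  also have "\<dots> \<le> (\<Sum>i<k. \<Sum>j\<in>{p i..<p (Suc i)}. \<bar>a j\<bar>)"
    by (rule sum_mono) (simp add: ne sum_abs)
  also have "\<dots> = (\<Sum>j\<in>{p 0..<p k}. \<bar>a j\<bar>)" by (rule sum_concat[OF m])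
  also have "\<dots> = (\<Sum>j<p k. \<bar>a j\<bar>)" using kp by (simp add: atLeast0LessThan)
  also have "\<dots> \<le> (\<Sum>j<N. \<bar>a j\<bar>)" by (rule sum_abs_le_support) (use supp in auto)
  finally show ?thesis .
qed

lemma PSet_ne: "PSet \<noteq> {}"
  unfolding PSet_def by auto

lemma Jbdd:
  fixes e :: "nat \<Rightarrow> 'a::real_normed_vector"
  assumes ne: "\<And>i. norm (e i) = 1" and supp: "\<forall>j\<ge>N. a j = 0"
  shows "bdd_above ((\<lambda>kp. norm (JV e a (fst kp) (snd kp))) ` PSet)"
  by (rule bdd_aboveI[of _ "\<Sum>j<N. \<bar>a j\<bar>"]) (use JV_bound[OF ne supp] in \<open>auto simp: PSet_def\<close>)

lemma Jupper:
  fixes e :: "nat \<Rightarrow> 'a::real_normed_vector"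
  assumes ne: "\<And>i. norm (e i) = 1" and supp: "\<forall>j\<ge>N. a j = 0"
    and kp: "p 0 = 0" "\<forall>i<k. p i < p (Suc i)"
  shows "norm (JV e a k p) \<le> Jnorm e a"
proof -
  have "(k, p) \<in> PSet" using kp by (simp add: PSet_def)
  have "norm (JV e a k p) \<le> (SUP kp\<in>PSet. norm (JV e a (fst kp) (snd kp)))"
    using cSUP_upper[OF \<open>(k, p) \<in> PSet\<close> Jbdd[of e, OF ne supp]] by simp
  then show ?thesis unfolding Jnorm_alt .
qed

lemma Jnonneg:
  fixes e :: "nat \<Rightarrow> 'a::real_normed_vector"
  assumes ne: "\<And>i. norm (e i) = 1" and supp: "\<forall>j\<ge>N. a j = 0"
  shows "0 \<le> Jnorm e a"
  using Jupper[OF ne supp, of "\<lambda>_. 0" 0] by (simp add: JV_def)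

lemma Jnear:
  fixes e :: "nat \<Rightarrow> 'a::real_normed_vector"
  assumes ne: "\<And>i. norm (e i) = 1" and supp: "\<forall>j\<ge>N. a j = 0"
    and pos: "Jnorm e a > 0"
  shows "\<exists>k p. p 0 = 0 \<and> (\<forall>i<k. p i < p (Suc i)) \<and> Jnorm e a < 2 * norm (JV e a k p)"
proof -
  have "Jnorm e a / 2 < Jnorm e a" using pos by simp
  then have "Jnorm e a / 2 < (SUP kp\<in>PSet. norm (JV e a (fst kp) (snd kp)))"
    by (simp only: Jnorm_alt)
  then have "\<exists>kp\<in>PSet. Jnorm e a / 2 < norm (JV e a (fst kp) (snd kp))"
    using iffD1[OF less_cSUP_iff[OF PSet_ne Jbdd[of e, OF ne supp]]] by blast
  then obtain k p where "(k, p) \<in> PSet" "Jnorm e a / 2 < norm (JV e a k p)"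
    by force
  then show ?thesis unfolding PSet_def by (auto simp: mult.commute)
qed

lemma sum_ind_ivl:
  fixes f :: "nat \<Rightarrow> real"
  shows "(\<Sum>j<x. (if j \<in> {u..<v} then f j else 0)) = (\<Sum>j\<in>{u..<min v x}. f j)"
proof -
  have "(\<Sum>j<x. (if j \<in> {u..<v} then f j else 0)) = (\<Sum>j\<in>{..<x} \<inter> {u..<v}. f j)"
    by (rule sum.inter_restrict[symmetric]) simp
  also have "{..<x} \<inter> {u..<v} = {u..<min v x}" by auto
  finally show ?thesis .
qed

lemma main_comb:
  fixes e :: "nat \<Rightarrow> 'a::real_normed_vector"
  assumes ne: "\<And>i. norm (e i) = 1"
    and L: "\<forall>(B::nat set) A c. finite B \<longrightarrow>
       norm (\<Sum>j\<in>B \<inter> A. c j *\<^sub>R e j) \<le> L * norm (\<Sum>j\<in>B. c j *\<^sub>R e j)"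
    and L1: "L \<ge> 1"
    and RD: "\<forall>(k::nat) (m::nat \<Rightarrow> nat) (n::nat \<Rightarrow> nat) (b::nat \<Rightarrow> real).
        (\<forall>i<k. m i \<le> n i) \<and> (\<forall>i. Suc i < k \<longrightarrow> n i < m (Suc i)) \<longrightarrow>
        norm (\<Sum>i<k. b i *\<^sub>R e (m i)) \<le> D * norm (\<Sum>i<k. b i *\<^sub>R e (n i))"
    and D0: "D \<ge> 0"
    and nn: "\<forall>i<l. n i < n (Suc i)"
    and zero: "\<forall>i<l. (\<Sum>j\<in>{n i..<n (Suc i)}. a j) = 0"
  shows "\<exists>(q::nat \<Rightarrow> nat) (c::nat \<Rightarrow> real).
       (\<forall>i<l. q i < q (Suc i)) \<and>
       (\<forall>i<l. norm (\<Sum>j\<in>{q i..<q (Suc i)}. c j *\<^sub>R e j)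
               \<le> Jnorm e (\<lambda>j. if j \<in> {n i..<n (Suc i)} then a j else 0)) \<and>
       Jnorm e (\<lambda>j. if j \<in> {n 0..<n l} then a j else 0)
         \<le> (4 * (1 + D) * L * L) * norm (\<Sum>i<l. \<Sum>j\<in>{q i..<q (Suc i)}. c j *\<^sub>R e j)"
proof -
  define \<alpha> where "\<alpha> = (\<lambda>j. if j \<in> {n 0..<n l} then a j else 0)"
  define \<alpha>i where "\<alpha>i = (\<lambda>i j. if j \<in> {n i..<n (Suc i)} then a j else 0)"
  have supp: "\<forall>j\<ge>n l. \<alpha> j = 0" by (simp add: \<alpha>_def)
  have suppi: "\<forall>j\<ge>n (Suc i). \<alpha>i i j = 0" for i by (simp add: \<alpha>i_def)
  have Jnn: "0 \<le> Jnorm e (\<alpha>i i)" for i by (rule Jnonneg[OF ne suppi])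
  have nmono: "\<forall>i<l. n i \<le> n (Suc i)" using nn by (simp add: less_imp_le)
  show ?thesis
  proof (cases "Jnorm e \<alpha> \<le> 0")
    case True
    show ?thesis
      by (rule exI[of _ n], rule exI[of _ "\<lambda>_. 0"]) (use True Jnn nn in \<open>simp add: \<alpha>_def \<alpha>i_def\<close>)
  next
    case False
    then have Jpos: "Jnorm e \<alpha> > 0" by simp
    obtain K p where p0: "p 0 = 0" and pinc: "\<forall>i<K. p i < p (Suc i)"
      and near: "Jnorm e \<alpha> < 2 * norm (JV e \<alpha> K p)"
      using Jnear[OF ne supp Jpos] by blast

    have pmono: "\<forall>i<K. p i \<le> p (Suc i)" using pinc by (simp add: less_imp_le)
    define S where "S = (\<lambda>x. \<Sum>j<x. \<alpha> j)"
    have S_eq: "S x = (\<Sum>j\<in>{n 0..<min (n l) x}. a j)" for x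
      unfolding S_def \<alpha>_def by (rule sum_ind_ivl)
    have n_le: "i \<le> j \<Longrightarrow> j \<le> l \<Longrightarrow> n i \<le> n j" for i j
      using mono_steps[OF nmono] by blast
    have n_less_iff: "i \<le> l \<Longrightarrow> j \<le> l \<Longrightarrow> n i < n j \<longleftrightarrow> i < j" for i j
      using strict_steps_iff[OF nn] by blast
    have S_bd: "S (n t) = 0" if t: "t \<le> l" for t
    proof -
      have "min (n l) (n t) = n t" using n_le[OF t order_refl] by simp
      then have "S (n t) = (\<Sum>j\<in>{n 0..<n t}. a j)" by (simp add: S_eq)
      also have "\<dots> = (\<Sum>i<t. \<Sum>j\<in>{n i..<n (Suc i)}. a j)"
        by (rule sum_concat[symmetric]) (use nmono t in auto)
      also have "\<dots> = 0" using zero t by simp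
      finally show ?thesis .
    qed
    have S_low: "x \<le> n 0 \<Longrightarrow> S x = 0" for x by (simp add: S_eq)
    have S_high: "n l \<le> x \<Longrightarrow> S x = 0" for x
    proof -
      assume "n l \<le> x"
      then have "S x = S (n l)" by (simp add: S_eq min_def)
      then show ?thesis using S_bd[of l] by simp
    qed
    have ivl: "x \<le> y \<Longrightarrow> (\<Sum>j\<in>{x..<y}. \<alpha> j) = S y - S x" for x y
      unfolding S_def by (rule ivl_sum_diff)
    define bd where "bd = n ` {..l}"
    define bb where "bb = (\<lambda>k. Max (insert 0 {t \<in> bd. t < p (Suc k)}))"
    have bb_fin: "finite (insert 0 {t\<in>bd. t < p (Suc k)})" for k by (simp add: bd_def)
    have bb_lt: "bb k < p (Suc k)" if k: "k < K" for k
    proof -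
      have "p k < p (Suc k)" using pinc k by blast
      then have "0 < p (Suc k)" by (rule le_less_trans[OF le0])
      then show ?thesis unfolding bb_def using Max_less_iff[OF bb_fin] by auto
    qed
    have bb_ge: "t \<le> l \<Longrightarrow> n t < p (Suc k) \<Longrightarrow> n t \<le> bb k" for t k
      unfolding bb_def by (rule Max_ge[OF bb_fin]) (auto simp: bd_def)
    have bb_cases: "bb k = 0 \<or> (\<exists>t\<le>l. bb k = n t)" for k
    proof -
      have "bb k \<in> insert 0 {t\<in>bd. t < p (Suc k)}" unfolding bb_def by (rule Max_in[OF bb_fin]) simp
      then show ?thesis by (auto simp: bd_def)
    qed
    define z where "z = (\<lambda>k. max (bb k) (p k))"
    define F where "F = (\<lambda>k. S (z k) - S (p k))"
    define G where "G = (\<lambda>k. S (p (Suc k)) - S (z k))"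
    have z_rng: "p k \<le> z k \<and> z k < p (Suc k)" if "k < K" for k
      using bb_lt[OF that] pinc that by (auto simp: z_def)
    have z_ge_bb: "bb k \<le> z k" for k by (simp add: z_def)
    have z_gt: "\<exists>t\<le>l. z k = n t" if k: "k < K" and pz: "p k < z k" for k
    proof -
      have zb: "z k = bb k" using pz by (simp add: z_def max_def split: if_splits)
      then have "bb k \<noteq> 0" using pz by simp
      then show ?thesis using bb_cases[of k] zb by auto
    qed
    have F_nz: "p k < z k \<and> p k \<in> {n 0..<n l}" if k: "k < K" and Fk: "F k \<noteq> 0" for k
    proof -
      have pz: "p k < z k"
      proof (rule ccontr)
        assume "\<not> p k < z k"
        then have "z k = p k" using z_rng[OF k] by simp
        then show False using Fk by (simp add: F_def)
      qed
      obtain t where t: "t \<le> l" "z k = n t" using z_gt[OF k pz] by blast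
      have "S (p k) \<noteq> 0" using Fk S_bd[OF t(1)] t(2) by (simp add: F_def)
      then have "\<not> p k \<le> n 0" "\<not> n l \<le> p k" using S_low S_high by blast+
      then show ?thesis using pz by simp
    qed
    have G_nz: "z k \<in> {n 0..<n l}" if k: "k < K" and Gk: "G k \<noteq> 0" for k
    proof (rule ccontr)
      assume nz: "z k \<notin> {n 0..<n l}"
      show False
      proof (cases "n l \<le> z k")
        case True
        then have "S (z k) = 0" "S (p (Suc k)) = 0" using S_high z_rng[OF k] by auto
        then show False using Gk by (simp add: G_def)
      next
        case False
        then have zl: "z k < n 0" using nz by simp
        have "p (Suc k) \<le> n 0"
        proof (rule ccontr)
          assume "\<not> p (Suc k) \<le> n 0"
          then have "n 0 \<le> bb k" using bb_ge[of 0 k] by simp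
          then show False using zl z_ge_bb[of k] by simp
        qed
        then have "S (z k) = 0" "S (p (Suc k)) = 0" using S_low zl by auto
        then show False using Gk by (simp add: G_def)
      qed
    qed
    define Zr where "Zr = z ` {..<K}"
    have F_Zr: "p k \<notin> Zr" if k: "k < K" and Fk: "F k \<noteq> 0" for k
    proof
      assume "p k \<in> Zr"
      then obtain k' where k': "k' < K" "p k = z k'" by (auto simp: Zr_def)
      have "k = k'"
        by (rule ivl_unique[OF pinc k k'(1), of "p k"]) (use z_rng[OF k] z_rng[OF k'(1)] k'(2) in auto)
      then show False using F_nz[OF k Fk] k'(2) by simp
    qed
    have cFG: "(\<Sum>j\<in>{p k..<p (Suc k)}. \<alpha> j) = F k + G k" if "k < K" for k
      using ivl[of "p k" "p (Suc k)"] z_rng[OF that] pinc that by (simp add: F_def G_def)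
    have X_eq: "JV e \<alpha> K p = (\<Sum>k<K. F k *\<^sub>R e (p k)) + (\<Sum>k<K. G k *\<^sub>R e (p k))"
    proof -
      have "JV e \<alpha> K p = (\<Sum>k<K. (F k + G k) *\<^sub>R e (p k))"
        unfolding JV_def by (rule sum.cong) (simp_all add: cFG)
      then show ?thesis by (simp add: scaleR_add_left sum.distrib)
    qed
    have RDapp: "norm (\<Sum>k<K. G k *\<^sub>R e (p k)) \<le> D * norm (\<Sum>k<K. G k *\<^sub>R e (z k))"
    proof -
      have "(\<forall>i<K. p i \<le> z i) \<and> (\<forall>i. Suc i < K \<longrightarrow> z i < p (Suc i))" using z_rng by auto
      then show ?thesis using RD by blast
    qed
    define R where "R = {n 0..<n l}"
    define I where "I = {k\<in>{..<K}. p k \<in> R}"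
    define J where "J = {k\<in>{..<K}. z k \<in> R}"
    define Pf where "Pf = (\<Sum>k\<in>I. F k *\<^sub>R e (p k)) + (\<Sum>k\<in>J. G k *\<^sub>R e (z k))"
    have finI: "finite I" and finJ: "finite J" by (simp_all add: I_def J_def)
    have Fpart: "(\<Sum>k<K. F k *\<^sub>R e (p k)) = (\<Sum>k\<in>{k\<in>I. p k \<in> - Zr}. F k *\<^sub>R e (p k)) + (\<Sum>k\<in>{k\<in>J. z k \<in> - Zr}. G k *\<^sub>R e (z k))"
    proof -
      have e1: "{k\<in>J. z k \<in> - Zr} = {}" by (auto simp: J_def Zr_def)
      have e2: "(\<Sum>k<K. F k *\<^sub>R e (p k)) = (\<Sum>k\<in>{k\<in>I. p k \<in> - Zr}. F k *\<^sub>R e (p k))"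
      proof (rule sum.mono_neutral_right)
        show "\<forall>k\<in>{..<K} - {k\<in>I. p k \<in> - Zr}. F k *\<^sub>R e (p k) = 0"
        proof
          fix k assume "k \<in> {..<K} - {k\<in>I. p k \<in> - Zr}"
          then have k: "k < K" and nk: "\<not> (p k \<in> R \<and> p k \<notin> Zr)" by (auto simp: I_def)
          have "F k = 0"
          proof (rule ccontr)
            assume "F k \<noteq> 0"
            then show False using F_nz[OF k] F_Zr[OF k] nk by (simp add: R_def)
          qed
          then show "F k *\<^sub>R e (p k) = 0" by simp
        qed
      qed (auto simp: I_def)
      show ?thesis unfolding e2 e1 by simp
    qed
    have Gpart: "(\<Sum>k<K. G k *\<^sub>R e (z k)) = (\<Sum>k\<in>{k\<in>I. p k \<in> Zr}. F k *\<^sub>R e (p k)) + (\<Sum>k\<in>{k\<in>J. z k \<in> Zr}. G k *\<^sub>R e (z k))"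
    proof -
      have g1: "(\<Sum>k\<in>{k\<in>I. p k \<in> Zr}. F k *\<^sub>R e (p k)) = 0"
      proof (rule sum.neutral, rule ballI)
        fix k assume "k \<in> {k\<in>I. p k \<in> Zr}"
        then have k: "k < K" "p k \<in> Zr" by (auto simp: I_def)
        then have "F k = 0" using F_Zr by blast
        then show "F k *\<^sub>R e (p k) = 0" by simp
      qed
      have g2: "{k\<in>J. z k \<in> Zr} = J" by (auto simp: J_def Zr_def)
      have g3: "(\<Sum>k<K. G k *\<^sub>R e (z k)) = (\<Sum>k\<in>J. G k *\<^sub>R e (z k))"
      proof (rule sum.mono_neutral_right)
        show "\<forall>k\<in>{..<K} - J. G k *\<^sub>R e (z k) = 0"
        proof
          fix k assume "k \<in> {..<K} - J"
          then have k: "k < K" and nk: "z k \<notin> R" by (auto simp: J_def)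
          have "G k = 0" using G_nz[OF k] nk by (auto simp: R_def)
          then show "G k *\<^sub>R e (z k) = 0" by simp
        qed
      qed (auto simp: J_def)
      show ?thesis unfolding g1 g2 g3 by simp
    qed
    have nF: "norm (\<Sum>k<K. F k *\<^sub>R e (p k)) \<le> L * norm Pf"
      unfolding Fpart Pf_def by (rule fproj2[OF L finI finJ])
    have nG: "norm (\<Sum>k<K. G k *\<^sub>R e (z k)) \<le> L * norm Pf"
      unfolding Gpart Pf_def by (rule fproj2[OF L finI finJ])
    have nX: "norm (JV e \<alpha> K p) \<le> (1 + D) * L * norm Pf"
    proof -
      have "norm (JV e \<alpha> K p) \<le> norm (\<Sum>k<K. F k *\<^sub>R e (p k)) + norm (\<Sum>k<K. G k *\<^sub>R e (p k))"
        unfolding X_eq by (rule norm_triangle_ineq)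
      also have "\<dots> \<le> L * norm Pf + D * (L * norm Pf)"
        using nF RDapp mult_left_mono[OF nG D0] by linarith
      also have "\<dots> = (1 + D) * L * norm Pf" by (simp add: algebra_simps)
      finally show ?thesis .
    qed
    define y where "y = (\<lambda>j. (\<Sum>k\<in>{k\<in>{..<K}. p k = j}. F k) + (\<Sum>k\<in>{k\<in>{..<K}. z k = j}. G k))"
    have Pgroup: "(\<Sum>k\<in>{k\<in>{..<K}. p k \<in> T}. F k *\<^sub>R e (p k)) + (\<Sum>k\<in>{k\<in>{..<K}. z k \<in> T}. G k *\<^sub>R e (z k))
        = (\<Sum>j\<in>T. y j *\<^sub>R e j)" if T: "finite T" for T
    proof -
      have h1: "(\<Sum>k\<in>{k\<in>{..<K}. p k \<in> T}. F k *\<^sub>R e (p k)) = (\<Sum>j\<in>T. (\<Sum>k\<in>{k\<in>{..<K}. p k = j}. F k) *\<^sub>R e j)"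
        by (rule group_pos_filter) (use T in auto)
      have h2: "(\<Sum>k\<in>{k\<in>{..<K}. z k \<in> T}. G k *\<^sub>R e (z k)) = (\<Sum>j\<in>T. (\<Sum>k\<in>{k\<in>{..<K}. z k = j}. G k) *\<^sub>R e j)"
        by (rule group_pos_filter) (use T in auto)
      show ?thesis unfolding h1 h2 by (simp add: y_def scaleR_add_left sum.distrib)
    qed
    define cc where "cc = (\<lambda>j. y j / (2 * L))"
    have Lpos: "L > 0" using L1 by simp
    have ccB: "(\<Sum>j\<in>T. cc j *\<^sub>R e j) = (1 / (2 * L)) *\<^sub>R (\<Sum>j\<in>T. y j *\<^sub>R e j)" for T
      by (simp add: cc_def scaleR_sum_right)
    have wsum: "(\<Sum>i<l. \<Sum>j\<in>{n i..<n (Suc i)}. cc j *\<^sub>R e j) = (1 / (2 * L)) *\<^sub>R Pf"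
    proof -
      have "(\<Sum>i<l. \<Sum>j\<in>{n i..<n (Suc i)}. cc j *\<^sub>R e j) = (\<Sum>j\<in>{n 0..<n l}. cc j *\<^sub>R e j)"
        by (rule sum_concat[OF nmono])
      also have "\<dots> = (1 / (2 * L)) *\<^sub>R (\<Sum>j\<in>R. y j *\<^sub>R e j)" by (simp add: ccB R_def)
      also have "(\<Sum>j\<in>R. y j *\<^sub>R e j) = Pf"
        unfolding Pf_def I_def J_def by (rule Pgroup[symmetric]) (simp add: R_def)
      finally show ?thesis .
    qed
    have Pf_norm: "norm Pf = 2 * L * norm (\<Sum>i<l. \<Sum>j\<in>{n i..<n (Suc i)}. cc j *\<^sub>R e j)"
      unfolding wsum using Lpos by simp
    have final: "Jnorm e \<alpha> \<le> (4 * (1 + D) * L * L) * norm (\<Sum>i<l. \<Sum>j\<in>{n i..<n (Suc i)}. cc j *\<^sub>R e j)"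
    proof -
      have "Jnorm e \<alpha> \<le> 2 * ((1 + D) * L * norm Pf)" using near nX by linarith
      also have "\<dots> = (4 * (1 + D) * L * L) * norm (\<Sum>i<l. \<Sum>j\<in>{n i..<n (Suc i)}. cc j *\<^sub>R e j)"
        unfolding Pf_norm by (simp add: algebra_simps)
      finally show ?thesis .
    qed
    have blk: "norm (\<Sum>j\<in>{n i..<n (Suc i)}. cc j *\<^sub>R e j) \<le> Jnorm e (\<alpha>i i)" if il: "i < l" for i
    proof -
      define B where "B = {n i..<n (Suc i)}"
      have il1: "Suc i \<le> l" using il by simp
      have nB: "n i < n (Suc i)" using nn il by simp
      define Si where "Si = (\<lambda>x. \<Sum>j<x. \<alpha>i i j)"
      have Si_eq: "Si x = (\<Sum>j\<in>{n i..<min (n (Suc i)) x}. a j)" for x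
        unfolding Si_def \<alpha>i_def by (rule sum_ind_ivl)
      have Si_low: "x \<le> n i \<Longrightarrow> Si x = 0" for x by (simp add: Si_eq)
      have Si_high: "n (Suc i) \<le> x \<Longrightarrow> Si x = 0" for x
        using zero il by (simp add: Si_eq min_def)
      have Si_S: "Si x = S x" if x: "n i \<le> x" "x \<le> n (Suc i)" for x
      proof -
        have nl: "n (Suc i) \<le> n l" using n_le[OF il1 order_refl] .
        have n0: "n 0 \<le> n i" using n_le[of 0 i] il by simp
        have "min (n l) x = x" using x nl by simp
        then have "S x = (\<Sum>j\<in>{n 0..<x}. a j)" by (simp add: S_eq)
        also have "\<dots> = (\<Sum>j\<in>{n 0..<n i}. a j) + (\<Sum>j\<in>{n i..<x}. a j)"
          using sum.atLeastLessThan_concat[OF n0 x(1), of a] by simp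
        also have "(\<Sum>j\<in>{n 0..<n i}. a j) = S (n i)"
          using n_le[of i l] il by (simp add: S_eq min_def)
        also have "\<dots> = 0" using S_bd[of i] il by simp
        finally show ?thesis using x by (simp add: Si_eq min_def)
      qed
      define ci where "ci = (\<lambda>k. \<Sum>j\<in>{p k..<p (Suc k)}. \<alpha>i i j)"
      have ci_eq: "ci k = Si (p (Suc k)) - Si (p k)" if "k < K" for k
        unfolding ci_def Si_def using pinc that by (simp add: ivl_sum_diff less_imp_le)
      define Xi where "Xi = (\<Sum>k<K. ci k *\<^sub>R e (p k))"
      have Xi_J: "norm Xi \<le> Jnorm e (\<alpha>i i)"
        using Jupper[OF ne suppi p0 pinc] by (simp add: JV_def Xi_def ci_def)
      have zB_fact: "p k < z k \<and> z k = n i" if k: "k < K" and pk: "p k \<notin> B" and zk: "z k \<in> B" for k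
      proof -
        have pz: "p k < z k"
        proof (rule ccontr)
          assume "\<not> p k < z k"
          then have "z k = p k" using z_rng[OF k] by simp
          then show False using pk zk by simp
        qed
        obtain t where t: "t \<le> l" "z k = n t" using z_gt[OF k pz] by blast
        have "n i \<le> n t" "n t < n (Suc i)" using zk t by (auto simp: B_def)
        then have "\<not> t < i" "t < Suc i" using n_less_iff[of t i] n_less_iff[of t "Suc i"] t il by auto
        then have "t = i" by simp
        then show ?thesis using pz t by simp
      qed
      define Q where "Q = {k\<in>{..<K}. p k \<notin> B \<and> z k \<in> B}"
      have per: "(if p k \<in> B then F k *\<^sub>R e (p k) else 0) + (if z k \<in> B then G k *\<^sub>R e (z k) else 0)
           = (if p k \<in> B then ci k *\<^sub>R e (p k) else 0) + (if p k \<notin> B \<and> z k \<in> B then ci k *\<^sub>R e (n i) else 0)"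
        if k: "k < K" for k
      proof -
        have zr: "p k \<le> z k" "z k < p (Suc k)" using z_rng[OF k] by auto
        have cik: "ci k = Si (p (Suc k)) - Si (p k)" using ci_eq[OF k] .
        consider (a) "p k \<in> B" "z k = p k" | (b) "p k \<in> B" "p k < z k" | (c) "p k \<notin> B" "z k \<in> B"
          | (d) "p k \<notin> B" "z k \<notin> B"
          using zr by force
        then show ?thesis
        proof cases
          case a
          have "p (Suc k) \<le> n (Suc i)"
          proof (rule ccontr)
            assume "\<not> p (Suc k) \<le> n (Suc i)"
            then have "n (Suc i) \<le> bb k" using bb_ge[of "Suc i" k] il1 by simp
            then have "n (Suc i) \<le> z k" using z_ge_bb[of k] by simp
            then show False using a by (simp add: B_def)
          qed
          moreover have "n i \<le> p k" "p k \<le> n (Suc i)" using a by (auto simp: B_def)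
          moreover have "p k < p (Suc k)" using pinc k by blast
          ultimately have "Si (p k) = S (p k)" "Si (p (Suc k)) = S (p (Suc k))"
            using Si_S by auto
          then have "ci k = G k" "F k = 0" using a cik by (simp_all add: F_def G_def)
          then show ?thesis using a by simp
        next
          case b
          obtain t where t: "t \<le> l" "z k = n t" using z_gt[OF k b(2)] by blast
          have "n i < n t" using b t by (simp add: B_def)
          then have "i < t" using n_less_iff[of i t] il t by simp
          then have nt: "n (Suc i) \<le> n t" using n_le[of "Suc i" t] t by simp
          then have zB: "z k \<notin> B" using t by (simp add: B_def)
          have "Si (p (Suc k)) = 0" using Si_high zr t nt by simp
          moreover have "F k = - S (p k)" using S_bd[OF t(1)] t by (simp add: F_def)
          moreover have "Si (p k) = S (p k)" using Si_S b by (simp add: B_def)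
          ultimately have "ci k = F k" using cik by simp
          then show ?thesis using b zB by simp
        next
          case c
          have zi: "z k = n i" and pz: "p k < z k" using zB_fact[OF k c] by auto
          have pki: "p k \<le> n i" using pz zi by simp
          have "p (Suc k) \<le> n (Suc i)"
          proof (rule ccontr)
            assume "\<not> p (Suc k) \<le> n (Suc i)"
            then have "n (Suc i) \<le> bb k" using bb_ge[of "Suc i" k] il1 by simp
            then have "n (Suc i) \<le> z k" using z_ge_bb[of k] by simp
            then show False using zi nB by simp
          qed
          then have "Si (p (Suc k)) = S (p (Suc k))" using Si_S zr zi by simp
          moreover have "G k = S (p (Suc k))" using S_bd[of i] il zi by (simp add: G_def)
          moreover have "Si (p k) = 0" using Si_low pki by simp
          ultimately have "ci k = G k" using cik by simp
          then show ?thesis using c zi by simp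
        next
          case d then show ?thesis by simp
        qed
      qed
      have PB: "(\<Sum>k\<in>{k\<in>{..<K}. p k \<in> B}. F k *\<^sub>R e (p k)) + (\<Sum>k\<in>{k\<in>{..<K}. z k \<in> B}. G k *\<^sub>R e (z k))
          = (\<Sum>k\<in>{k\<in>{..<K}. p k \<in> B}. ci k *\<^sub>R e (p k)) + (\<Sum>k\<in>Q. ci k *\<^sub>R e (n i))"
      proof -
        have "(\<Sum>k\<in>{k\<in>{..<K}. p k \<in> B}. F k *\<^sub>R e (p k)) + (\<Sum>k\<in>{k\<in>{..<K}. z k \<in> B}. G k *\<^sub>R e (z k))
            = (\<Sum>k<K. (if p k \<in> B then F k *\<^sub>R e (p k) else 0) + (if z k \<in> B then G k *\<^sub>R e (z k) else 0))"
          unfolding sum.inter_filter[OF finite_lessThan] by (simp add: sum.distrib)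
        also have "\<dots> = (\<Sum>k<K. (if p k \<in> B then ci k *\<^sub>R e (p k) else 0) + (if p k \<notin> B \<and> z k \<in> B then ci k *\<^sub>R e (n i) else 0))"
          by (rule sum.cong) (simp_all add: per)
        also have "\<dots> = (\<Sum>k\<in>{k\<in>{..<K}. p k \<in> B}. ci k *\<^sub>R e (p k)) + (\<Sum>k\<in>Q. ci k *\<^sub>R e (n i))"
          unfolding Q_def sum.inter_filter[OF finite_lessThan] by (simp add: sum.distrib)
        finally show ?thesis .
      qed
      have Quniq: "k = k'" if "k \<in> Q" "k' \<in> Q" for k k'
      proof -
        from that have k: "k < K" "k' < K" "p k \<notin> B" "z k \<in> B" "p k' \<notin> B" "z k' \<in> B"
          by (auto simp: Q_def)
        have "z k = n i" "z k' = n i" using zB_fact k by blast+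
        then show ?thesis
          by (intro ivl_unique[OF pinc k(1) k(2), of "n i"]) (use z_rng[OF k(1)] z_rng[OF k(2)] in auto)
      qed
      have nQ: "norm (\<Sum>k\<in>Q. ci k *\<^sub>R e (n i)) \<le> L * norm Xi"
      proof (cases "Q = {}")
        case True
        then show ?thesis using Lpos by simp
      next
        case False
        then obtain k0 where k0: "k0 \<in> Q" by blast
        then have Qk0: "Q = {k0}" using Quniq by blast
        have k0K: "k0 < K" using k0 by (simp add: Q_def)
        have set0: "{k\<in>{..<K}. p k \<in> {p k0}} = {k0}"
        proof (intro equalityI subsetI)
          fix k assume "k \<in> {k\<in>{..<K}. p k \<in> {p k0}}"
          then have k: "k < K" "p k = p k0" by auto
          have "p k < p (Suc k)" "p k0 < p (Suc k0)" using pinc k(1) k0K by blast+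
          then show "k \<in> {k0}"
            using ivl_unique[OF pinc k(1) k0K, of "p k0"] k by simp
        qed (use k0K in simp)
        have "norm (\<Sum>k\<in>Q. ci k *\<^sub>R e (n i)) = norm (\<Sum>k\<in>{k\<in>{..<K}. p k \<in> {p k0}}. ci k *\<^sub>R e (p k))"
          unfolding Qk0 set0 by (simp add: ne)
        also have "\<dots> \<le> L * norm Xi" unfolding Xi_def by (rule fproj1[OF L]) simp
        finally show ?thesis .
      qed
      have nB1: "norm (\<Sum>k\<in>{k\<in>{..<K}. p k \<in> B}. ci k *\<^sub>R e (p k)) \<le> L * norm Xi"
        unfolding Xi_def by (rule fproj1[OF L]) simp
      have "(\<Sum>j\<in>B. cc j *\<^sub>R e j) = (1 / (2 * L)) *\<^sub>R (\<Sum>j\<in>B. y j *\<^sub>R e j)" by (rule ccB)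
      also have "(\<Sum>j\<in>B. y j *\<^sub>R e j) = (\<Sum>k\<in>{k\<in>{..<K}. p k \<in> B}. ci k *\<^sub>R e (p k)) + (\<Sum>k\<in>Q. ci k *\<^sub>R e (n i))"
        using Pgroup[of B] PB by (simp add: B_def)
      finally have eqB: "norm (\<Sum>j\<in>B. cc j *\<^sub>R e j) = norm ((\<Sum>k\<in>{k\<in>{..<K}. p k \<in> B}. ci k *\<^sub>R e (p k)) + (\<Sum>k\<in>Q. ci k *\<^sub>R e (n i))) / (2 * L)"
        using Lpos by simp
      have "norm ((\<Sum>k\<in>{k\<in>{..<K}. p k \<in> B}. ci k *\<^sub>R e (p k)) + (\<Sum>k\<in>Q. ci k *\<^sub>R e (n i))) \<le> 2 * L * norm Xi"
        using norm_triangle_ineq[of "\<Sum>k\<in>{k\<in>{..<K}. p k \<in> B}. ci k *\<^sub>R e (p k)" "\<Sum>k\<in>Q. ci k *\<^sub>R e (n i)"] nB1 nQ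
        by linarith
      then have "norm (\<Sum>j\<in>B. cc j *\<^sub>R e j) \<le> norm Xi"
        unfolding eqB using Lpos by (simp add: divide_le_eq mult.commute)
      then show ?thesis using Xi_J by (simp add: B_def)
    qed
    show ?thesis
      by (rule exI[of _ n], rule exI[of _ cc]) (use nn blk final in \<open>simp add: \<alpha>_def \<alpha>i_def\<close>)
  qed
qed

theorem lemma1:
  fixes e :: "nat \<Rightarrow> 'a::banach"
  assumes "right_dominant e" and "normalized e"
  shows "\<exists>C::real. \<forall>(l::nat) (n::nat \<Rightarrow> nat) (a::nat \<Rightarrow> real).
    (\<forall>i<l. n i < n (Suc i)) \<and>
    (\<forall>i<l. (\<Sum>j\<in>{n i..<n (Suc i)}. a j) = 0) \<longrightarrow>
    (\<exists>(q::nat \<Rightarrow> nat) (c::nat \<Rightarrow> real).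
       (\<forall>i<l. q i < q (Suc i)) \<and>
       (\<forall>i<l. norm (\<Sum>j\<in>{q i..<q (Suc i)}. c j *\<^sub>R e j)
               \<le> Jnorm e (\<lambda>j. if j \<in> {n i..<n (Suc i)} then a j else 0)) \<and>
       Jnorm e (\<lambda>j. if j \<in> {n 0..<n l} then a j else 0)
         \<le> C * norm (\<Sum>i<l. \<Sum>j\<in>{q i..<q (Suc i)}. c j *\<^sub>R e j))"
proof -
  have unc: "unconditional_basis e" using assms(1) unfolding right_dominant_def by blast
  obtain D where RD: "\<forall>(k::nat) (m::nat \<Rightarrow> nat) (n::nat \<Rightarrow> nat) (b::nat \<Rightarrow> real).
        (\<forall>i<k. m i \<le> n i) \<and> (\<forall>i. Suc i < k \<longrightarrow> n i < m (Suc i)) \<longrightarrow>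
        norm (\<Sum>i<k. b i *\<^sub>R e (m i)) \<le> D * norm (\<Sum>i<k. b i *\<^sub>R e (n i))"
    using assms(1) unfolding right_dominant_def by blast
  interpret ubasis e using unc assms(2) by unfold_locales
  obtain L where L1: "L \<ge> 1" and Lp: "\<forall>(B::nat set) A c. finite B \<longrightarrow>
     norm (\<Sum>j\<in>B \<inter> A. c j *\<^sub>R e j) \<le> L * norm (\<Sum>j\<in>B. c j *\<^sub>R e j)"
    using proj_bound by blast
  define D' where "D' = max D 0"
  have D'0: "D' \<ge> 0" by (simp add: D'_def)
  have RD': "\<forall>(k::nat) (m::nat \<Rightarrow> nat) (n::nat \<Rightarrow> nat) (b::nat \<Rightarrow> real).
        (\<forall>i<k. m i \<le> n i) \<and> (\<forall>i. Suc i < k \<longrightarrow> n i < m (Suc i)) \<longrightarrow>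
        norm (\<Sum>i<k. b i *\<^sub>R e (m i)) \<le> D' * norm (\<Sum>i<k. b i *\<^sub>R e (n i))"
  proof (intro allI impI)
    fix k :: nat and m n :: "nat \<Rightarrow> nat" and b :: "nat \<Rightarrow> real"
    assume h: "(\<forall>i<k. m i \<le> n i) \<and> (\<forall>i. Suc i < k \<longrightarrow> n i < m (Suc i))"
    have "norm (\<Sum>i<k. b i *\<^sub>R e (m i)) \<le> D * norm (\<Sum>i<k. b i *\<^sub>R e (n i))"
      using RD h by blast
    also have "\<dots> \<le> D' * norm (\<Sum>i<k. b i *\<^sub>R e (n i))"
      by (rule mult_right_mono) (simp_all add: D'_def)
    finally show "norm (\<Sum>i<k. b i *\<^sub>R e (m i)) \<le> D' * norm (\<Sum>i<k. b i *\<^sub>R e (n i))" .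
  qed
  show ?thesis
  proof (rule exI[of _ "4 * (1 + D') * L * L"], intro allI impI)
    fix l :: nat and n :: "nat \<Rightarrow> nat" and a :: "nat \<Rightarrow> real"
    assume h: "(\<forall>i<l. n i < n (Suc i)) \<and> (\<forall>i<l. (\<Sum>j\<in>{n i..<n (Suc i)}. a j) = 0)"
    show "\<exists>(q::nat \<Rightarrow> nat) (c::nat \<Rightarrow> real).
       (\<forall>i<l. q i < q (Suc i)) \<and>
       (\<forall>i<l. norm (\<Sum>j\<in>{q i..<q (Suc i)}. c j *\<^sub>R e j)
               \<le> Jnorm e (\<lambda>j. if j \<in> {n i..<n (Suc i)} then a j else 0)) \<and>
       Jnorm e (\<lambda>j. if j \<in> {n 0..<n l} then a j else 0)
         \<le> (4 * (1 + D') * L * L) * norm (\<Sum>i<l. \<Sum>j\<in>{q i..<q (Suc i)}. c j *\<^sub>R e j)"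
      by (rule main_comb[OF norm_e Lp L1 RD' D'0]) (use h in auto)
  qed
qed

end
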